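(* Let $\mathcal{J}=\{0,1,\dots,f-1\}$ and let $B,B'\in M_{2^f}(\mathbb{F})$ be matrices with all entries nonzero, rows and columns indexed by the subsets of $\mathcal{J}$, each satisfying $B_{J_1,J_3}/B_{J_1,J_4}=B_{J_2,J_3}/B_{J_2,J_4}$ (resp. the same for $B'$) for all $J_1,J_2,J_3,J_4\subseteq\mathcal{J}$. If \[\frac{B_{J,\emptyset}}{B_{J^c,\emptyset}B_{J,J^c}}=\frac{B'_{J,\emptyset}}{B'_{J^c,\emptyset}B'_{J,J^c}}\quad\text{for all }J\subseteq\mathcal{J},\] then there is an invertible diagonal matrix $Q$ with $B'=Q^{-1}BQ$. That is, up to conjugation by diagonal matrices, $B$ is uniquely determined by the quantities $B_{J,\emptyset}/(B_{J^c,\emptyset}B_{J,J^c})$, $J\subseteq\mathcal{J}$.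
   Context: $\mathbb{F}$ is a finite field; $J^c$ denotes the complement of $J$ in $\mathcal{J}$. *)

theory Defs
  imports Main
begin

text \<open>Index set \<J> = {0..<f}; matrices in M_{2^f}(F) with rows/columns indexed by
  subsets of \<J> are represented as functions nat set \<Rightarrow> nat set \<Rightarrow> 'a,
  only their values on subsets of \<J> being relevant.\<close>

definition index_sets :: "nat \<Rightarrow> nat set set" where
  "index_sets f = Pow {0..<f}"

definition compl_J :: "nat \<Rightarrow> nat set \<Rightarrow> nat set" where
  "compl_J f J = {0..<f} - J"

definition invariant_ratio :: "nat \<Rightarrow> (nat set \<Rightarrow> nat set \<Rightarrow> 'a::field) \<Rightarrow> nat set \<Rightarrow> 'a" where
  "invariant_ratio f B J = B J {} / (B (compl_J f J) {} * B J (compl_J f J))"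

end

theory Submission
  imports Defs
begin

theorem lemma5p4:
  fixes f :: nat
    and B B' :: "nat set \<Rightarrow> nat set \<Rightarrow> 'a::{field, finite}"
  assumes nz: "\<forall>J1\<in>index_sets f. \<forall>J2\<in>index_sets f. B J1 J2 \<noteq> 0"
    and nz': "\<forall>J1\<in>index_sets f. \<forall>J2\<in>index_sets f. B' J1 J2 \<noteq> 0"
    and rk: "\<forall>J1\<in>index_sets f. \<forall>J2\<in>index_sets f. \<forall>J3\<in>index_sets f. \<forall>J4\<in>index_sets f.
               B J1 J3 / B J1 J4 = B J2 J3 / B J2 J4"
    and rk': "\<forall>J1\<in>index_sets f. \<forall>J2\<in>index_sets f. \<forall>J3\<in>index_sets f. \<forall>J4\<in>index_sets f.
               B' J1 J3 / B' J1 J4 = B' J2 J3 / B' J2 J4"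
    and inv: "\<forall>J\<in>index_sets f. invariant_ratio f B J = invariant_ratio f B' J"
  shows "\<exists>Q :: nat set \<Rightarrow> 'a.
           (\<forall>J\<in>index_sets f. Q J \<noteq> 0) \<and>
           (\<forall>J1\<in>index_sets f. \<forall>J2\<in>index_sets f.
              B' J1 J2 = inverse (Q J1) * B J1 J2 * Q J2)"
proof -
  have E: "{} \<in> index_sets f" by (simp add: index_sets_def)
  have fa: "B J1 J2 = B J1 {} * B {} J2 / B {} {}"
    if "J1 \<in> index_sets f" "J2 \<in> index_sets f" for J1 J2
  proof -
    have "B J1 J2 / B J1 {} = B {} J2 / B {} {}" using rk that E by blast
    moreover have "B J1 {} \<noteq> 0" "B {} {} \<noteq> 0" using nz that E by auto
    ultimately show ?thesis by (simp add: field_simps)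
  qed
  have fa': "B' J1 J2 = B' J1 {} * B' {} J2 / B' {} {}"
    if "J1 \<in> index_sets f" "J2 \<in> index_sets f" for J1 J2
  proof -
    have "B' J1 J2 / B' J1 {} = B' {} J2 / B' {} {}" using rk' that E by blast
    moreover have "B' J1 {} \<noteq> 0" "B' {} {} \<noteq> 0" using nz' that E by auto
    ultimately show ?thesis by (simp add: field_simps)
  qed
  have diag: "B K K = B' K K" if K: "K \<in> index_sets f" for K
  proof -
    define J where "J = compl_J f K"
    have J: "J \<in> index_sets f" by (simp add: J_def compl_J_def index_sets_def)
    have cJ: "compl_J f J = K" using K by (auto simp: J_def compl_J_def index_sets_def)
    have r1: "invariant_ratio f B J = inverse (B K K)"
    proof -
      have n: "B J {} \<noteq> 0" "B {} {} \<noteq> 0" "B K {} \<noteq> 0" "B {} K \<noteq> 0"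
        using nz J K E by auto
      show ?thesis unfolding invariant_ratio_def cJ
        using n by (subst fa[OF J K], subst fa[OF K K]) (simp add: field_simps)
    qed
    have r2: "invariant_ratio f B' J = inverse (B' K K)"
    proof -
      have n: "B' J {} \<noteq> 0" "B' {} {} \<noteq> 0" "B' K {} \<noteq> 0" "B' {} K \<noteq> 0"
        using nz' J K E by auto
      show ?thesis unfolding invariant_ratio_def cJ
        using n by (subst fa'[OF J K], subst fa'[OF K K]) (simp add: field_simps)
    qed
    show ?thesis using inv J r1 r2 by simp
  qed
  show ?thesis
  proof (intro exI[of _ "\<lambda>J. B J {} / B' J {}"] conjI ballI)
    fix J assume "J \<in> index_sets f"
    then show "B J {} / B' J {} \<noteq> 0" using nz nz' E by auto
  next
    fix J1 J2 assume J1: "J1 \<in> index_sets f" and J2: "J2 \<in> index_sets f"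
    have n: "B J1 {} \<noteq> 0" "B' J1 {} \<noteq> 0" "B J2 {} \<noteq> 0" "B' J2 {} \<noteq> 0"
      "B {} {} \<noteq> 0" "B' {} {} \<noteq> 0"
      using nz nz' J1 J2 E by auto
    have d: "B J2 {} * B {} J2 / B {} {} = B' J2 {} * B' {} J2 / B' {} {}"
      using diag[OF J2] fa[OF J2 J2] fa'[OF J2 J2] by simp
    show "B' J1 J2 = inverse (B J1 {} / B' J1 {}) * B J1 J2 * (B J2 {} / B' J2 {})"
      unfolding fa[OF J1 J2] fa'[OF J1 J2] using n d
      by (simp add: field_simps)
  qed
qed

end
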